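(* Let $\Lambda$ be a finite group generated by a symmetric subset $S\subset\Lambda$ with $\delta:=\big\|\frac1{|S|}\sum_{g\in S}\lambda^0(g)\big\|<1$. Suppose $(\alpha_g)_{g\in S}$ are complex numbers of modulus $1$ and $\xi\in\ell_2\Lambda$ is a unit vector such that $\varepsilon:=\max_{g\in S}\|\lambda(g)\xi-\alpha_g\xi\|>0$. Then there is a (unitary, one-dimensional) character $\chi$ of $\Lambda$ with $$\max_{g\in S}|\bar\chi(g)-\alpha_g|\le\Big(\frac{100\varepsilon}{1-\delta}\Big)^{1/2}.$$
   Context: $\lambda$ is the left regular representation of $\Lambda$ on $\ell_2\Lambda$ and $\lambda^0$ is its restriction to $\ell_2\Lambda\ominus\mathbb C\mathbf 1$ (the orthogonal complement of the constant functions). A character means a group homomorphism $\Lambda\to\{z\in\mathbb C:|z|=1\}$. *)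

theory Defs
  imports "HOL-Algebra.Group" "HOL-Algebra.Generated_Groups" "HOL-Analysis.Analysis"
begin

text \<open>The Hilbert space l2 of a finite group G is modelled by functions
  'a => complex, only their values on carrier G matter.\<close>

definition l2norm :: "('a, 'b) monoid_scheme \<Rightarrow> ('a \<Rightarrow> complex) \<Rightarrow> real" where
  "l2norm G \<xi> = sqrt (\<Sum>h\<in>carrier G. (cmod (\<xi> h))\<^sup>2)"

definition lreg :: "('a, 'b) monoid_scheme \<Rightarrow> 'a \<Rightarrow> ('a \<Rightarrow> complex) \<Rightarrow> ('a \<Rightarrow> complex)" where
  "lreg G g \<xi> = (\<lambda>h. \<xi> (inv\<^bsub>G\<^esub> g \<otimes>\<^bsub>G\<^esub> h))"

definition avg_op :: "('a, 'b) monoid_scheme \<Rightarrow> 'a set \<Rightarrow> ('a \<Rightarrow> complex) \<Rightarrow> ('a \<Rightarrow> complex)" where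
  "avg_op G S \<xi> = (\<lambda>h. (\<Sum>g\<in>S. lreg G g \<xi> h) / of_nat (card S))"

text \<open>Operator norm of (1/|S|) sum_{g in S} lambda^0(g), i.e. of the averaging operator
  restricted to the orthogonal complement of the constants (functions with zero sum).\<close>
definition lambda0_avg_norm :: "('a, 'b) monoid_scheme \<Rightarrow> 'a set \<Rightarrow> real" where
  "lambda0_avg_norm G S =
     Sup {l2norm G (avg_op G S \<xi>) | \<xi>. (\<Sum>h\<in>carrier G. \<xi> h) = 0 \<and> l2norm G \<xi> \<le> 1}"

definition is_character :: "('a, 'b) monoid_scheme \<Rightarrow> ('a \<Rightarrow> complex) \<Rightarrow> bool" where
  "is_character G \<phi> \<longleftrightarrow> (\<forall>g\<in>carrier G. cmod (\<phi> g) = 1) \<and>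
     (\<forall>g\<in>carrier G. \<forall>h\<in>carrier G. \<phi> (g \<otimes>\<^bsub>G\<^esub> h) = \<phi> g * \<phi> h)"

end

theory Submission imports Defs begin

definition ip :: "('a,'b) monoid_scheme \<Rightarrow> ('a \<Rightarrow> complex) \<Rightarrow> ('a \<Rightarrow> complex) \<Rightarrow> complex" where
  "ip G f g = (\<Sum>h\<in>carrier G. f h * cnj (g h))"
definition nsq :: "('a,'b) monoid_scheme \<Rightarrow> ('a \<Rightarrow> complex) \<Rightarrow> real" where
  "nsq G f = (\<Sum>h\<in>carrier G. (cmod (f h))\<^sup>2)"

lemma l2norm_nsq: "l2norm G f = sqrt (nsq G f)"
  by (simp add: l2norm_def nsq_def)
lemma nsq_nonneg: "nsq G f \<ge> 0"
  by (simp add: nsq_def sum_nonneg)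
lemma l2norm_sq: "(l2norm G f)\<^sup>2 = nsq G f"
  by (simp add: l2norm_nsq nsq_nonneg)
lemma l2norm_L2: "l2norm G f = L2_set (\<lambda>h. cmod (f h)) (carrier G)"
  by (simp add: l2norm_def L2_set_def)

lemma l2norm_triangle: "l2norm G (\<lambda>h. f h + g h) \<le> l2norm G f + l2norm G g"
proof -
  have "L2_set (\<lambda>h. cmod (f h + g h)) (carrier G) \<le> L2_set (\<lambda>h. cmod (f h) + cmod (g h)) (carrier G)"
    by (rule L2_set_mono) (auto simp: norm_triangle_ineq)
  also have "\<dots> \<le> L2_set (\<lambda>h. cmod (f h)) (carrier G) + L2_set (\<lambda>h. cmod (g h)) (carrier G)"
    by (rule L2_set_triangle_ineq)
  finally show ?thesis by (simp add: l2norm_L2)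
qed

lemma l2norm_scale: "l2norm G (\<lambda>h. c * f h) = cmod c * l2norm G f"
proof -
  have "nsq G (\<lambda>h. c * f h) = (cmod c)\<^sup>2 * nsq G f"
    by (simp add: nsq_def norm_mult power_mult_distrib sum_distrib_left)
  thus ?thesis by (simp add: l2norm_nsq real_sqrt_mult)
qed

lemma cs_ip: "cmod (ip G f g) \<le> l2norm G f * l2norm G g"
proof -
  have "cmod (ip G f g) \<le> (\<Sum>h\<in>carrier G. cmod (f h * cnj (g h)))"
    unfolding ip_def by (rule norm_sum)
  also have "\<dots> = (\<Sum>h\<in>carrier G. \<bar>cmod (f h)\<bar> * \<bar>cmod (g h)\<bar>)"
    by (simp add: norm_mult)
  also have "\<dots> \<le> l2norm G f * l2norm G g"
    unfolding l2norm_L2 by (rule L2_set_mult_ineq)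
  finally show ?thesis .
qed

lemma jensen_sq:
  fixes a :: "'c \<Rightarrow> complex"
  assumes "finite S" "S \<noteq> {}"
  shows "(cmod ((\<Sum>g\<in>S. a g) / of_nat (card S)))\<^sup>2 \<le> (\<Sum>g\<in>S. (cmod (a g))\<^sup>2) / card S"
proof -
  have cS: "card S > 0" using assms by (simp add: card_gt_0_iff)
  have "cmod (\<Sum>g\<in>S. a g) \<le> (\<Sum>g\<in>S. \<bar>1\<bar> * \<bar>cmod (a g)\<bar>)"
    by (simp add: norm_sum)
  also have "\<dots> \<le> L2_set (\<lambda>_. 1) S * L2_set (\<lambda>g. cmod (a g)) S"
    by (rule L2_set_mult_ineq)
  also have "\<dots> = sqrt (card S) * sqrt (\<Sum>g\<in>S. (cmod (a g))\<^sup>2)"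
    by (simp add: L2_set_def)
  finally have 1: "cmod (\<Sum>g\<in>S. a g) \<le> sqrt (card S) * sqrt (\<Sum>g\<in>S. (cmod (a g))\<^sup>2)" .
  have "(cmod (\<Sum>g\<in>S. a g))\<^sup>2 \<le> (sqrt (card S) * sqrt (\<Sum>g\<in>S. (cmod (a g))\<^sup>2))\<^sup>2"
    using 1 by (intro power_mono) auto
  also have "\<dots> = card S * (\<Sum>g\<in>S. (cmod (a g))\<^sup>2)"
    by (simp add: power_mult_distrib sum_nonneg)
  finally have 2: "(cmod (\<Sum>g\<in>S. a g))\<^sup>2 \<le> card S * (\<Sum>g\<in>S. (cmod (a g))\<^sup>2)" .
  have "(cmod ((\<Sum>g\<in>S. a g) / of_nat (card S)))\<^sup>2 = (cmod (\<Sum>g\<in>S. a g))\<^sup>2 / (card S)\<^sup>2"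
    by (simp add: norm_divide power_divide)
  also have "\<dots> \<le> card S * (\<Sum>g\<in>S. (cmod (a g))\<^sup>2) / (card S)\<^sup>2"
    using 2 cS by (intro divide_right_mono) auto
  also have "\<dots> = (\<Sum>g\<in>S. (cmod (a g))\<^sup>2) / card S"
    using cS by (simp add: power2_eq_square)
  finally show ?thesis .
qed

locale fgrp = group G for G (structure) + assumes fin: "finite (carrier G)"

context fgrp
begin

lemma reidx_l: "g \<in> carrier G \<Longrightarrow> (\<Sum>h\<in>carrier G. F (g \<otimes> h)) = sum F (carrier G)"
  by (rule sum.reindex_bij_witness[of _ "\<lambda>h. inv g \<otimes> h" "\<lambda>h. g \<otimes> h"])
     (auto simp: m_assoc[symmetric])

lemma reidx_r: "g \<in> carrier G \<Longrightarrow> (\<Sum>h\<in>carrier G. F (h \<otimes> g)) = sum F (carrier G)"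
  by (rule sum.reindex_bij_witness[of _ "\<lambda>h. h \<otimes> inv g" "\<lambda>h. h \<otimes> g"])
     (auto simp: m_assoc)

end

locale fsetup = fgrp + fixes S assumes S_sub: "S \<subseteq> carrier G" and S_ne: "S \<noteq> {}"
begin

lemma S_fin: "finite S" using S_sub fin finite_subset by blast
lemma cardS: "card S > 0" using S_fin S_ne by (simp add: card_gt_0_iff)

lemma avg_contr_nsq: "nsq G (avg_op G S f) \<le> nsq G f"
proof -
  have "nsq G (avg_op G S f) \<le> (\<Sum>h\<in>carrier G. (\<Sum>g\<in>S. (cmod (f (inv g \<otimes> h)))\<^sup>2) / card S)"
    unfolding nsq_def avg_op_def lreg_def
    by (rule sum_mono, rule jensen_sq[OF S_fin S_ne])
  also have "\<dots> = (\<Sum>g\<in>S. \<Sum>h\<in>carrier G. (cmod (f (inv g \<otimes> h)))\<^sup>2) / card S"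
    by (simp add: sum_divide_distrib[symmetric] sum.swap[of _ S])
  also have "\<dots> = (\<Sum>g\<in>S. nsq G f) / card S"
    unfolding nsq_def using S_sub
    by (intro arg_cong2[where f="(/)"] sum.cong refl reidx_l) auto
  also have "\<dots> = nsq G f" using cardS by simp
  finally show ?thesis .
qed

lemma avg_contr: "l2norm G (avg_op G S f) \<le> l2norm G f"
  using avg_contr_nsq by (simp add: l2norm_nsq)

definition "Phi = {l2norm G (avg_op G S \<xi>) | \<xi>. (\<Sum>h\<in>carrier G. \<xi> h) = 0 \<and> l2norm G \<xi> \<le> 1}"

lemma Phi_bdd: "bdd_above Phi"
  unfolding Phi_def using avg_contr by (intro bdd_aboveI[of _ 1]) (auto intro: order_trans)

lemma delta_eq: "lambda0_avg_norm G S = Sup Phi"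
  by (simp add: lambda0_avg_norm_def Phi_def)

lemma avg_zero: "avg_op G S (\<lambda>_. 0) = (\<lambda>_. 0)"
  by (simp add: avg_op_def lreg_def)

lemma delta_nonneg: "lambda0_avg_norm G S \<ge> 0"
proof -
  have "0 \<in> Phi" unfolding Phi_def
    by (rule CollectI, rule exI[of _ "\<lambda>_. 0"]) (simp add: avg_zero l2norm_def)
  thus ?thesis unfolding delta_eq using Phi_bdd cSup_upper by blast
qed

lemma avg_scale: "avg_op G S (\<lambda>h. c * f h) = (\<lambda>h. c * avg_op G S f h)"
  by (simp add: avg_op_def lreg_def sum_distrib_left)

lemma gap:
  assumes "(\<Sum>h\<in>carrier G. f h) = 0"
  shows "l2norm G (avg_op G S f) \<le> lambda0_avg_norm G S * l2norm G f"
proof (cases "l2norm G f = 0")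
  case True
  hence "nsq G f = 0" by (simp add: l2norm_nsq)
  hence z: "\<forall>h\<in>carrier G. f h = 0" unfolding nsq_def using fin
    by (subst (asm) sum_nonneg_eq_0_iff) auto
  have "l2norm G (avg_op G S f) = 0"
    unfolding l2norm_def avg_op_def lreg_def using z S_sub
    by (auto intro!: sum.neutral simp: subsetD)
  thus ?thesis using True by simp
next
  case False
  define s where "s = l2norm G f"
  have "nsq G f \<noteq> 0" using False by (simp add: l2norm_nsq)
  with nsq_nonneg[of G f] have "nsq G f > 0" by linarith
  hence sp: "s > 0" using s_def by (simp add: l2norm_nsq)
  define f' where "f' = (\<lambda>h. complex_of_real (1/s) * f h)"
  have "(\<Sum>h\<in>carrier G. f' h) = 0" unfolding f'_def using assms by (simp add: sum_divide_distrib[symmetric])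
  moreover have "l2norm G f' = 1" unfolding f'_def l2norm_scale using sp s_def by (simp add: norm_divide)
  ultimately have "l2norm G (avg_op G S f') \<in> Phi" unfolding Phi_def by auto
  hence "l2norm G (avg_op G S f') \<le> lambda0_avg_norm G S"
    unfolding delta_eq using Phi_bdd cSup_upper by blast
  moreover have "l2norm G (avg_op G S f') = l2norm G (avg_op G S f) / s"
    unfolding f'_def avg_scale l2norm_scale using sp by (simp add: norm_divide)
  ultimately show ?thesis using sp s_def by (simp add: divide_le_eq mult.commute)
qed


lemma one_le_n: "card (carrier G) > 0"
  using fin by (auto simp: card_gt_0_iff)

definition "psi \<xi> y h = \<xi> h * cnj (\<xi> (h \<otimes> y))"
definition "mm \<xi> y = (\<Sum>z\<in>carrier G. \<xi> z * cnj (\<xi> (z \<otimes> y))) / of_nat (card (carrier G))"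
definition "EE \<xi> = (\<Sum>h\<in>carrier G. \<Sum>k\<in>carrier G. (cmod (\<xi> h * cnj (\<xi> k) - mm \<xi> (inv h \<otimes> k)))\<^sup>2)"

lemma aux: "(N::complex) \<noteq> 0 \<Longrightarrow> A = (P - N*m)/N \<Longrightarrow> D = N*p - P \<Longrightarrow> p - m - A = D/N"
  by (simp add: field_simps)

lemma L7:
  assumes y: "y \<in> carrier G" and d1: "lambda0_avg_norm G S < 1"
  shows "(1 - lambda0_avg_norm G S)\<^sup>2 * nsq G (\<lambda>h. psi \<xi> y h - mm \<xi> y)
     \<le> (\<Sum>g\<in>S. \<Sum>h\<in>carrier G. (cmod (psi \<xi> y h - psi \<xi> y (inv g \<otimes> h)))\<^sup>2) / card S"
proof -
  define \<delta> where "\<delta> = lambda0_avg_norm G S"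
  define \<phi> where "\<phi> = (\<lambda>h. psi \<xi> y h - mm \<xi> y)"
  define N where "N = card S"
  have Np: "N > 0" using cardS N_def by simp
  have n0: "(of_nat (card (carrier G)) :: complex) \<noteq> 0" using one_le_n by simp
  have s0: "(\<Sum>h\<in>carrier G. \<phi> h) = 0"
    unfolding \<phi>_def using n0 by (simp add: sum_subtractf mm_def psi_def)
  have diff: "\<phi> h - avg_op G S \<phi> h = (\<Sum>g\<in>S. psi \<xi> y h - psi \<xi> y (inv g \<otimes> h)) / of_nat N" for h
  proof -
    have "avg_op G S \<phi> h = ((\<Sum>g\<in>S. psi \<xi> y (inv g \<otimes> h)) - of_nat N * mm \<xi> y) / of_nat N"
      unfolding avg_op_def lreg_def \<phi>_def N_def by (simp add: sum_subtractf)
    moreover have "(\<Sum>g\<in>S. psi \<xi> y h - psi \<xi> y (inv g \<otimes> h)) = of_nat N * psi \<xi> y h - (\<Sum>g\<in>S. psi \<xi> y (inv g \<otimes> h))"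
      by (simp add: sum_subtractf N_def)
    ultimately show ?thesis using Np unfolding \<phi>_def by (intro aux) auto
  qed
  have "nsq G (\<lambda>h. \<phi> h - avg_op G S \<phi> h) \<le> (\<Sum>h\<in>carrier G. (\<Sum>g\<in>S. (cmod (psi \<xi> y h - psi \<xi> y (inv g \<otimes> h)))\<^sup>2) / card S)"
    unfolding nsq_def diff N_def
    by (rule sum_mono, rule jensen_sq[OF S_fin S_ne])
  also have "\<dots> = (\<Sum>g\<in>S. \<Sum>h\<in>carrier G. (cmod (psi \<xi> y h - psi \<xi> y (inv g \<otimes> h)))\<^sup>2) / card S"
    by (simp add: sum_divide_distrib[symmetric] sum.swap[of _ S])
  finally have A: "nsq G (\<lambda>h. \<phi> h - avg_op G S \<phi> h) \<le> \<dots>" .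
  have g: "l2norm G (avg_op G S \<phi>) \<le> \<delta> * l2norm G \<phi>" using gap[OF s0] \<delta>_def by simp
  have t: "l2norm G \<phi> \<le> l2norm G (\<lambda>h. \<phi> h - avg_op G S \<phi> h) + l2norm G (avg_op G S \<phi>)"
    using l2norm_triangle[of G "\<lambda>h. \<phi> h - avg_op G S \<phi> h" "avg_op G S \<phi>"] by simp
  have B: "(1 - \<delta>) * l2norm G \<phi> \<le> l2norm G (\<lambda>h. \<phi> h - avg_op G S \<phi> h)"
    using g t by (simp add: algebra_simps)
  have "(1 - \<delta>)\<^sup>2 * nsq G \<phi> = ((1 - \<delta>) * l2norm G \<phi>)\<^sup>2"
    by (simp add: power_mult_distrib l2norm_sq)
  also have "\<dots> \<le> (l2norm G (\<lambda>h. \<phi> h - avg_op G S \<phi> h))\<^sup>2"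
    using B d1 \<delta>_def nsq_nonneg[of G \<phi>] by (intro power_mono) (auto simp: l2norm_nsq)
  also have "\<dots> = nsq G (\<lambda>h. \<phi> h - avg_op G S \<phi> h)" by (simp add: l2norm_sq)
  finally show ?thesis using A \<phi>_def \<delta>_def by simp
qed

lemma cmod_sq_add: "(cmod (u + v))\<^sup>2 \<le> 2 * (cmod u)\<^sup>2 + 2 * (cmod v)\<^sup>2"
proof -
  have "(cmod (u + v))\<^sup>2 \<le> (cmod u + cmod v)\<^sup>2"
    by (intro power_mono norm_triangle_ineq) auto
  also have "\<dots> \<le> 2 * (cmod u)\<^sup>2 + 2 * (cmod v)\<^sup>2"
    using zero_le_power2[of "cmod u - cmod v"] unfolding power2_eq_square by (simp add: algebra_simps)
  finally show ?thesis .
qed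

lemma L8:
  assumes g: "g \<in> carrier G" and a: "cmod a = 1" and x1: "nsq G \<xi> = 1"
  shows "(\<Sum>y\<in>carrier G. \<Sum>h\<in>carrier G. (cmod (psi \<xi> y h - psi \<xi> y (inv g \<otimes> h)))\<^sup>2)
     \<le> 4 * nsq G (\<lambda>h. lreg G g \<xi> h - a * \<xi> h)"
proof -
  define g' where "g' = inv g"
  have g': "g' \<in> carrier G" using g g'_def by simp
  define d where "d = (\<lambda>h. \<xi> (g' \<otimes> h) - a * \<xi> h)"
  have dd: "nsq G (\<lambda>h. lreg G g \<xi> h - a * \<xi> h) = nsq G d"
    by (simp add: lreg_def d_def g'_def)
  define H where "H = (\<lambda>h k. (cmod (\<xi> h * cnj (\<xi> k) - \<xi> (g' \<otimes> h) * cnj (\<xi> (g' \<otimes> k))))\<^sup>2)"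
  have aa: "a * cnj a = 1"
    using a by (metis complex_norm_square of_real_1 power_one)
  have "(\<Sum>y\<in>carrier G. \<Sum>h\<in>carrier G. (cmod (psi \<xi> y h - psi \<xi> y (inv g \<otimes> h)))\<^sup>2)
      = (\<Sum>h\<in>carrier G. \<Sum>y\<in>carrier G. H h (h \<otimes> y))"
    by (subst sum.swap) (auto simp: H_def psi_def g'_def m_assoc g intro!: sum.cong)
  also have "\<dots> = (\<Sum>h\<in>carrier G. \<Sum>k\<in>carrier G. H h k)"
    by (intro sum.cong refl reidx_l)
  also have "\<dots> \<le> (\<Sum>h\<in>carrier G. \<Sum>k\<in>carrier G. 2 * (cmod (d h))\<^sup>2 * (cmod (\<xi> (g' \<otimes> k)))\<^sup>2 + 2 * (cmod (\<xi> h))\<^sup>2 * (cmod (d k))\<^sup>2)"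
  proof (intro sum_mono)
    fix h k
    have e: "\<xi> h * cnj (\<xi> k) - \<xi> (g' \<otimes> h) * cnj (\<xi> (g' \<otimes> k))
       = - (d h * cnj (\<xi> (g' \<otimes> k)) + a * \<xi> h * cnj (d k))"
      unfolding d_def using aa by (simp add: algebra_simps)
    have "H h k \<le> 2 * (cmod (d h * cnj (\<xi> (g' \<otimes> k))))\<^sup>2 + 2 * (cmod (a * \<xi> h * cnj (d k)))\<^sup>2"
      unfolding H_def e norm_minus_cancel by (rule cmod_sq_add)
    thus "H h k \<le> 2 * (cmod (d h))\<^sup>2 * (cmod (\<xi> (g' \<otimes> k)))\<^sup>2 + 2 * (cmod (\<xi> h))\<^sup>2 * (cmod (d k))\<^sup>2"
      by (simp add: norm_mult a power_mult_distrib)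
  qed
  also have "\<dots> = 2 * nsq G d * (\<Sum>k\<in>carrier G. (cmod (\<xi> (g' \<otimes> k)))\<^sup>2) + 2 * nsq G \<xi> * nsq G d"
  proof -
    have s1: "(\<Sum>h\<in>carrier G. \<Sum>k\<in>carrier G. 2 * (cmod (d h))\<^sup>2 * (cmod (\<xi> (g' \<otimes> k)))\<^sup>2) = 2 * (nsq G d * (\<Sum>k\<in>carrier G. (cmod (\<xi> (g' \<otimes> k)))\<^sup>2))"
      unfolding nsq_def unfolding sum_product by (simp add: sum_distrib_left mult.assoc)
    have s2: "(\<Sum>h\<in>carrier G. \<Sum>k\<in>carrier G. 2 * (cmod (\<xi> h))\<^sup>2 * (cmod (d k))\<^sup>2) = 2 * (nsq G \<xi> * nsq G d)"
      unfolding nsq_def unfolding sum_product by (simp add: sum_distrib_left mult.assoc)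
    show ?thesis unfolding sum.distrib s1 s2 by simp
  qed
  also have "\<dots> = 4 * nsq G d"
    using reidx_l[OF g', of "\<lambda>k. (cmod (\<xi> k))\<^sup>2"] x1 by (simp add: nsq_def)
  finally show ?thesis using dd by simp
qed


lemma EE_alt: "EE \<xi> = (\<Sum>y\<in>carrier G. nsq G (\<lambda>h. psi \<xi> y h - mm \<xi> y))"
proof -
  have "EE \<xi> = (\<Sum>h\<in>carrier G. \<Sum>y\<in>carrier G. (cmod (psi \<xi> y h - mm \<xi> y))\<^sup>2)"
    unfolding EE_def
  proof (rule sum.cong[OF refl])
    fix h assume h: "h \<in> carrier G"
    show "(\<Sum>k\<in>carrier G. (cmod (\<xi> h * cnj (\<xi> k) - mm \<xi> (inv h \<otimes> k)))\<^sup>2) =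
          (\<Sum>y\<in>carrier G. (cmod (psi \<xi> y h - mm \<xi> y))\<^sup>2)"
      using reidx_l[OF h, of "\<lambda>k. (cmod (\<xi> h * cnj (\<xi> k) - mm \<xi> (inv h \<otimes> k)))\<^sup>2"] h
      by (simp add: psi_def m_assoc[symmetric])
  qed
  also have "\<dots> = (\<Sum>y\<in>carrier G. nsq G (\<lambda>h. psi \<xi> y h - mm \<xi> y))"
    unfolding nsq_def by (rule sum.swap)
  finally show ?thesis .
qed

lemma L9:
  assumes d1: "lambda0_avg_norm G S < 1" and x1: "nsq G \<xi> = 1"
    and a: "\<forall>g\<in>S. cmod (\<alpha> g) = 1"
    and e: "\<forall>g\<in>S. nsq G (\<lambda>h. lreg G g \<xi> h - \<alpha> g * \<xi> h) \<le> \<epsilon>\<^sup>2"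
  shows "(1 - lambda0_avg_norm G S)\<^sup>2 * EE \<xi> \<le> 4 * \<epsilon>\<^sup>2"
proof -
  define F where "F = (\<lambda>g y. \<Sum>h\<in>carrier G. (cmod (psi \<xi> y h - psi \<xi> y (inv g \<otimes> h)))\<^sup>2)"
  have "(1 - lambda0_avg_norm G S)\<^sup>2 * EE \<xi>
      = (\<Sum>y\<in>carrier G. (1 - lambda0_avg_norm G S)\<^sup>2 * nsq G (\<lambda>h. psi \<xi> y h - mm \<xi> y))"
    by (simp add: EE_alt sum_distrib_left)
  also have "\<dots> \<le> (\<Sum>y\<in>carrier G. (\<Sum>g\<in>S. F g y) / card S)"
    unfolding F_def by (intro sum_mono L7 d1)
  also have "\<dots> = (\<Sum>g\<in>S. \<Sum>y\<in>carrier G. F g y) / card S"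
    by (simp add: sum_divide_distrib[symmetric] sum.swap[of _ S])
  also have "\<dots> \<le> (\<Sum>g\<in>S. 4 * \<epsilon>\<^sup>2) / card S"
  proof (intro divide_right_mono sum_mono)
    fix g assume g: "g \<in> S"
    have "(\<Sum>y\<in>carrier G. F g y) \<le> 4 * nsq G (\<lambda>h. lreg G g \<xi> h - \<alpha> g * \<xi> h)"
      unfolding F_def using g S_sub a x1 by (intro L8) auto
    also have "\<dots> \<le> 4 * \<epsilon>\<^sup>2" using e g by simp
    finally show "(\<Sum>y\<in>carrier G. F g y) \<le> 4 * \<epsilon>\<^sup>2" .
  qed simp
  also have "\<dots> = 4 * \<epsilon>\<^sup>2" using cardS by simp
  finally show ?thesis .
qed


definition "XX \<xi> f x = (\<Sum>h\<in>carrier G. \<xi> (x \<otimes> h) * cnj (f h))"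
definition "qf \<xi> f = (\<Sum>x\<in>carrier G. (cmod (XX \<xi> f x))\<^sup>2) / card (carrier G)"

lemma mm_alt:
  assumes h: "h \<in> carrier G" and k: "k \<in> carrier G"
  shows "(\<Sum>x\<in>carrier G. \<xi> (x \<otimes> h) * cnj (\<xi> (x \<otimes> k))) / of_nat (card (carrier G)) = mm \<xi> (inv h \<otimes> k)"
proof -
  have "(\<Sum>x\<in>carrier G. \<xi> (x \<otimes> h) * cnj (\<xi> (x \<otimes> k)))
      = (\<Sum>x\<in>carrier G. (\<lambda>z. \<xi> z * cnj (\<xi> (z \<otimes> (inv h \<otimes> k)))) (x \<otimes> h))"
    using h k by (intro sum.cong refl) (simp add: m_assoc[symmetric] r_inv, simp add: m_assoc)
  also have "\<dots> = (\<Sum>z\<in>carrier G. \<xi> z * cnj (\<xi> (z \<otimes> (inv h \<otimes> k))))"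
    by (rule reidx_r[OF h])
  finally show ?thesis by (simp add: mm_def)
qed

lemma qf_expand:
  "complex_of_real (qf \<xi> f) = (\<Sum>h\<in>carrier G. \<Sum>k\<in>carrier G. cnj (f h) * f k * mm \<xi> (inv h \<otimes> k))"
proof -
  have "complex_of_real (qf \<xi> f) = (\<Sum>x\<in>carrier G. XX \<xi> f x * cnj (XX \<xi> f x)) / of_nat (card (carrier G))"
    unfolding qf_def of_real_divide of_real_sum complex_norm_square by simp
  also have "\<dots> = (\<Sum>x\<in>carrier G. \<Sum>h\<in>carrier G. \<Sum>k\<in>carrier G. cnj (f h) * f k * (\<xi> (x \<otimes> h) * cnj (\<xi> (x \<otimes> k)))) / of_nat (card (carrier G))"
    unfolding XX_def cnj_sum sum_product by (simp add: algebra_simps)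
  also have "\<dots> = (\<Sum>h\<in>carrier G. \<Sum>k\<in>carrier G. \<Sum>x\<in>carrier G. cnj (f h) * f k * (\<xi> (x \<otimes> h) * cnj (\<xi> (x \<otimes> k)))) / of_nat (card (carrier G))"
    by (subst sum.swap, subst (2) sum.swap) simp
  also have "\<dots> = (\<Sum>h\<in>carrier G. \<Sum>k\<in>carrier G. cnj (f h) * f k * ((\<Sum>x\<in>carrier G. \<xi> (x \<otimes> h) * cnj (\<xi> (x \<otimes> k))) / of_nat (card (carrier G))))"
    by (simp add: sum_divide_distrib sum_distrib_left)
  also have "\<dots> = (\<Sum>h\<in>carrier G. \<Sum>k\<in>carrier G. cnj (f h) * f k * mm \<xi> (inv h \<otimes> k))"
    by (intro sum.cong refl) (simp add: mm_alt)
  finally show ?thesis .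
qed

lemma ip_expand:
  "complex_of_real ((cmod (ip G \<xi> f))\<^sup>2) = (\<Sum>h\<in>carrier G. \<Sum>k\<in>carrier G. cnj (f h) * f k * (\<xi> h * cnj (\<xi> k)))"
  unfolding complex_norm_square ip_def cnj_sum sum_product by (simp add: algebra_simps)

lemma L10: "\<bar>qf \<xi> f - (cmod (ip G \<xi> f))\<^sup>2\<bar> \<le> sqrt (EE \<xi>) * nsq G f"
proof -
  define D where "D = (\<lambda>h k. mm \<xi> (inv h \<otimes> k) - \<xi> h * cnj (\<xi> k))"
  define C where "C = carrier G"
  have "\<bar>qf \<xi> f - (cmod (ip G \<xi> f))\<^sup>2\<bar> = cmod (complex_of_real (qf \<xi> f) - complex_of_real ((cmod (ip G \<xi> f))\<^sup>2))"
    by (simp only: of_real_diff[symmetric] norm_of_real)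
  also have "\<dots> = cmod (\<Sum>h\<in>C. \<Sum>k\<in>C. cnj (f h) * f k * D h k)"
    unfolding qf_expand ip_expand D_def C_def by (simp add: sum_subtractf algebra_simps)
  also have "\<dots> \<le> (\<Sum>h\<in>C. \<Sum>k\<in>C. cmod (cnj (f h) * f k * D h k))"
    by (rule order_trans[OF norm_sum sum_mono[OF norm_sum]])
  also have "\<dots> = (\<Sum>p\<in>C \<times> C. \<bar>cmod (f (fst p)) * cmod (f (snd p))\<bar> * \<bar>cmod (D (fst p) (snd p))\<bar>)"
    by (simp add: sum.cartesian_product norm_mult case_prod_beta)
  also have "\<dots> \<le> L2_set (\<lambda>p. cmod (f (fst p)) * cmod (f (snd p))) (C \<times> C) * L2_set (\<lambda>p. cmod (D (fst p) (snd p))) (C \<times> C)"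
    by (rule L2_set_mult_ineq)
  also have "L2_set (\<lambda>p. cmod (f (fst p)) * cmod (f (snd p))) (C \<times> C) = nsq G f"
  proof -
    have "(\<Sum>p\<in>C \<times> C. (cmod (f (fst p)) * cmod (f (snd p)))\<^sup>2) = (nsq G f)\<^sup>2"
      unfolding nsq_def C_def power2_eq_square[of "sum _ _"] sum_product
      by (simp add: sum.cartesian_product case_prod_beta power_mult_distrib)
    thus ?thesis unfolding L2_set_def using nsq_nonneg[of G f] by simp
  qed
  also have "L2_set (\<lambda>p. cmod (D (fst p) (snd p))) (C \<times> C) = sqrt (EE \<xi>)"
  proof -
    have "(\<Sum>p\<in>C \<times> C. (cmod (D (fst p) (snd p)))\<^sup>2) = EE \<xi>"
      unfolding EE_def C_def D_def
      by (simp add: sum.cartesian_product case_prod_beta norm_minus_commute)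
    thus ?thesis unfolding L2_set_def by simp
  qed
  finally show ?thesis by (simp add: mult.commute)
qed


lemma qf_cong: "(\<And>h. h \<in> carrier G \<Longrightarrow> f h = g h) \<Longrightarrow> qf \<xi> f = qf \<xi> g"
  unfolding qf_def XX_def by (intro arg_cong2[where f="(/)"] sum.cong refl) simp_all
lemma nsq_cong: "(\<And>h. h \<in> carrier G \<Longrightarrow> f h = g h) \<Longrightarrow> nsq G f = nsq G g"
  unfolding nsq_def by (intro sum.cong refl) simp_all

lemma qf_scale: "qf \<xi> (\<lambda>h. c * f h) = (cmod c)\<^sup>2 * qf \<xi> f"
  unfolding qf_def XX_def
  by (simp add: sum_distrib_left[symmetric] mult.left_commute norm_mult power_mult_distrib)

lemma nsq_scale: "nsq G (\<lambda>h. c * f h) = (cmod c)\<^sup>2 * nsq G f"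
  by (simp add: nsq_def norm_mult power_mult_distrib sum_distrib_left)

lemma qf_nonneg: "qf \<xi> f \<ge> 0"
  unfolding qf_def by (simp add: sum_nonneg)

lemma qf_zero: "(\<And>h. h \<in> carrier G \<Longrightarrow> f h = 0) \<Longrightarrow> qf \<xi> f = 0"
  unfolding qf_def XX_def by simp

lemma nsq_zero_iff: "nsq G f = 0 \<longleftrightarrow> (\<forall>h\<in>carrier G. f h = 0)"
  unfolding nsq_def using fin by (subst sum_nonneg_eq_0_iff) auto

lemma XX_transl: "y \<in> carrier G \<Longrightarrow> x \<in> carrier G \<Longrightarrow> XX \<xi> (\<lambda>h. f (y \<otimes> h)) x = XX \<xi> f (x \<otimes> inv y)"
  unfolding XX_def
  using reidx_l[of y "\<lambda>k. \<xi> (x \<otimes> inv y \<otimes> k) * cnj (f k)"]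
  by (simp add: m_assoc[symmetric]) (simp add: m_assoc)

lemma qf_transl: "y \<in> carrier G \<Longrightarrow> qf \<xi> (\<lambda>h. f (y \<otimes> h)) = qf \<xi> f"
  unfolding qf_def using reidx_r[of "inv y" "\<lambda>x. (cmod (XX \<xi> f x))\<^sup>2"]
  by (simp add: XX_transl)

lemma nsq_transl: "y \<in> carrier G \<Longrightarrow> nsq G (\<lambda>h. f (y \<otimes> h)) = nsq G f"
  unfolding nsq_def by (rule reidx_l)

lemma cont_coord [continuous_intros]: "continuous_on A (\<lambda>f::'a \<Rightarrow> complex. f h)"
  by (rule continuous_on_subset[OF continuous_on_product_coordinates]) simp

lemma qf_cont: "continuous_on A (qf \<xi>)"
  unfolding qf_def XX_def using one_le_n by (intro continuous_intros) auto

lemma nsq_cont: "continuous_on A (nsq G)"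
  unfolding nsq_def by (intro continuous_intros)

lemma maximizer:
  assumes x1: "nsq G \<xi> = 1"
  shows "\<exists>f0. nsq G f0 = 1 \<and> (\<forall>f. qf \<xi> f \<le> qf \<xi> f0 * nsq G f) \<and> qf \<xi> \<xi> \<le> qf \<xi> f0"
proof -
  define B where "B = (\<lambda>h. if h \<in> carrier G then cball (0::complex) 1 else {0})"
  define K where "K = Pi\<^sub>E UNIV B \<inter> {f. nsq G f = 1}"
  have "compactin (product_topology (\<lambda>_. euclidean) UNIV) (Pi\<^sub>E UNIV B)"
    by (subst compactin_PiE) (auto simp: B_def)
  hence "compact (Pi\<^sub>E UNIV B)" by (simp add: euclidean_product_topology)
  moreover have "closed {f. nsq G f = 1}"
    by (rule closed_Collect_eq) (auto intro: nsq_cont)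
  ultimately have cK: "compact K" unfolding K_def by blast
  have le1: "cmod (f h) \<le> sqrt (nsq G f)" if "h \<in> carrier G" for f h
  proof -
    have "(cmod (f h))\<^sup>2 \<le> nsq G f"
      unfolding nsq_def using that fin by (intro member_le_sum) auto
    thus ?thesis by (simp add: real_le_rsqrt)
  qed
  define \<xi>' where "\<xi>' = (\<lambda>h. if h \<in> carrier G then \<xi> h else 0)"
  have "nsq G \<xi>' = 1" using x1 unfolding \<xi>'_def by (subst nsq_cong[of _ \<xi>]) auto
  moreover have "\<xi>' \<in> Pi\<^sub>E UNIV B"
    using le1[of _ \<xi>] x1 by (auto simp: PiE_UNIV_domain B_def \<xi>'_def)
  ultimately have xK: "\<xi>' \<in> K" unfolding K_def by simp
  obtain f0 where f0K: "f0 \<in> K" and mx: "\<forall>g\<in>K. qf \<xi> g \<le> qf \<xi> f0"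
    using continuous_attains_sup[OF cK _ qf_cont] xK by blast
  have n1: "nsq G f0 = 1" using f0K K_def by simp
  have "qf \<xi> \<xi>' = qf \<xi> \<xi>" by (rule qf_cong) (simp add: \<xi>'_def)
  hence "qf \<xi> \<xi> \<le> qf \<xi> f0"
    using mx xK by metis
  moreover have "qf \<xi> f \<le> qf \<xi> f0 * nsq G f" for f
  proof (cases "nsq G f = 0")
    case True
    hence "qf \<xi> f = 0" using nsq_zero_iff qf_zero by blast
    thus ?thesis using True by simp
  next
    case False
    define s where "s = sqrt (nsq G f)"
    have sp: "s > 0" using False nsq_nonneg[of G f] s_def by simp
    define g where "g = (\<lambda>h. if h \<in> carrier G then complex_of_real (1/s) * f h else 0)"
    have "nsq G g = nsq G (\<lambda>h. complex_of_real (1/s) * f h)" unfolding g_def by (rule nsq_cong) simp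
    also have "\<dots> = nsq G f / s\<^sup>2" unfolding nsq_scale using sp by (simp add: power_divide norm_divide)
    finally have ng: "nsq G g = nsq G f / s\<^sup>2" .
    have "nsq G g = 1" using ng sp s_def nsq_nonneg[of G f] False by simp
    moreover have "g \<in> Pi\<^sub>E UNIV B"
      using le1[of _ f] sp by (auto simp: PiE_UNIV_domain B_def g_def norm_divide s_def divide_le_eq)
    ultimately have "g \<in> K" unfolding K_def by simp
    hence "qf \<xi> g \<le> qf \<xi> f0" using mx by blast
    moreover have "qf \<xi> g = qf \<xi> f / s\<^sup>2"
    proof -
      have "qf \<xi> g = qf \<xi> (\<lambda>h. complex_of_real (1/s) * f h)" unfolding g_def by (rule qf_cong) simp
      also have "\<dots> = qf \<xi> f / s\<^sup>2" unfolding qf_scale using sp by (simp add: power_divide norm_divide)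
      finally show ?thesis .
    qed
    ultimately have "qf \<xi> f \<le> qf \<xi> f0 * s\<^sup>2" using sp by (simp add: divide_le_eq)
    thus ?thesis using s_def nsq_nonneg[of G f] by simp
  qed
  ultimately show ?thesis using n1 by blast
qed


definition "RR \<xi> u v = (\<Sum>x\<in>carrier G. cnj (XX \<xi> u x) * XX \<xi> v x) / of_nat (card (carrier G))"

lemma nsq_c: "complex_of_real (nsq G f) = (\<Sum>h\<in>carrier G. f h * cnj (f h))"
  unfolding nsq_def of_real_sum complex_norm_square ..

lemma qf_c: "complex_of_real (qf \<xi> f) = (\<Sum>x\<in>carrier G. XX \<xi> f x * cnj (XX \<xi> f x)) / of_nat (card (carrier G))"
  unfolding qf_def of_real_divide of_real_sum complex_norm_square by simp

lemma quad_pt: "(a + c * b) * cnj (a + c * b) = a * cnj a + cnj c * (a * cnj b) + c * cnj (a * cnj b) + c * cnj c * (b * cnj b)"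
  by (simp add: algebra_simps)

lemma E_nsq: "complex_of_real (nsq G (\<lambda>h. u h + c * v h)) = complex_of_real (nsq G u) + cnj c * ip G u v + c * cnj (ip G u v) + c * cnj c * complex_of_real (nsq G v)"
  unfolding nsq_c ip_def quad_pt cnj_sum sum.distrib sum_distrib_left ..

lemma E_XX: "XX \<xi> (\<lambda>h. u h + c * v h) x = XX \<xi> u x + cnj c * XX \<xi> v x"
  unfolding XX_def by (simp add: algebra_simps sum.distrib sum_distrib_left)

lemma E_qf: "complex_of_real (qf \<xi> (\<lambda>h. u h + c * v h)) = complex_of_real (qf \<xi> u) + cnj c * RR \<xi> u v + c * cnj (RR \<xi> u v) + c * cnj c * complex_of_real (qf \<xi> v)"
proof -
  have pt: "(XX \<xi> u x + cnj c * XX \<xi> v x) * cnj (XX \<xi> u x + cnj c * XX \<xi> v x)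
     = XX \<xi> u x * cnj (XX \<xi> u x) + cnj c * (cnj (XX \<xi> u x) * XX \<xi> v x) + c * cnj (cnj (XX \<xi> u x) * XX \<xi> v x) + c * cnj c * (XX \<xi> v x * cnj (XX \<xi> v x))" for x
    by (simp add: algebra_simps)
  show ?thesis
    unfolding qf_c E_XX pt RR_def cnj_sum sum.distrib sum_distrib_left add_divide_distrib complex_cnj_divide
    by (simp add: sum_distrib_left[symmetric] algebra_simps)
qed

lemma E_Q: "complex_of_real (\<mu> * nsq G (\<lambda>h. u h + c * v h) - qf \<xi> (\<lambda>h. u h + c * v h))
   = complex_of_real (\<mu> * nsq G u - qf \<xi> u) + cnj c * (of_real \<mu> * ip G u v - RR \<xi> u v)
     + c * cnj (of_real \<mu> * ip G u v - RR \<xi> u v) + c * cnj c * complex_of_real (\<mu> * nsq G v - qf \<xi> v)"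
  unfolding of_real_diff of_real_mult E_nsq E_qf by (simp add: algebra_simps)

lemma null_lemma:
  assumes bnd: "\<forall>f. qf \<xi> f \<le> \<mu> * nsq G f" and u0: "qf \<xi> u = \<mu> * nsq G u"
  shows "of_real \<mu> * ip G u v = RR \<xi> u v"
proof (rule ccontr)
  define p where "p = of_real \<mu> * ip G u v - RR \<xi> u v"
  assume "of_real \<mu> * ip G u v \<noteq> RR \<xi> u v"
  hence p0: "p \<noteq> 0" using p_def by simp
  define Qv where "Qv = \<mu> * nsq G v - qf \<xi> v"
  have Qv0: "Qv \<ge> 0" using bnd[rule_format, of v] Qv_def by linarith
  define t where "t = 1 / (Qv + 1)"
  have tp: "t > 0" using Qv0 t_def by simp
  have tQ: "t * Qv < 1" using Qv0 t_def tp by (simp add: field_simps)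
  define c where "c = - (of_real t * p)"
  have "complex_of_real (\<mu> * nsq G (\<lambda>h. u h + c * v h) - qf \<xi> (\<lambda>h. u h + c * v h))
       = cnj c * p + c * cnj p + c * cnj c * complex_of_real Qv"
    unfolding E_Q using u0 by (simp add: p_def Qv_def)
  also have "\<dots> = complex_of_real ((cmod p)\<^sup>2 * (t * (t * Qv - 2)))"
    unfolding c_def of_real_mult of_real_diff complex_norm_square by (simp add: algebra_simps)
  finally have eq: "\<mu> * nsq G (\<lambda>h. u h + c * v h) - qf \<xi> (\<lambda>h. u h + c * v h) = (cmod p)\<^sup>2 * (t * (t * Qv - 2))"
    using of_real_eq_iff by blast
  have "(cmod p)\<^sup>2 * (t * (t * Qv - 2)) \<ge> 0"
    using bnd[rule_format, of "\<lambda>h. u h + c * v h"] eq by simp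
  moreover have "(cmod p)\<^sup>2 > 0" using p0 by simp
  moreover have "t * (t * Qv - 2) < 0" using tp tQ by (simp add: mult_pos_neg)
  ultimately show False using tp tQ by (simp add: mult_pos_neg zero_le_mult_iff)
qed

lemma null_comb:
  assumes bnd: "\<forall>f. qf \<xi> f \<le> \<mu> * nsq G f" and u0: "qf \<xi> u = \<mu> * nsq G u"
    and v0: "qf \<xi> v = \<mu> * nsq G v"
  shows "qf \<xi> (\<lambda>h. a * u h + b * v h) = \<mu> * nsq G (\<lambda>h. a * u h + b * v h)"
proof -
  define u' where "u' = (\<lambda>h. a * u h)"
  define v' where "v' = (\<lambda>h. b * v h)"
  have u'0: "qf \<xi> u' = \<mu> * nsq G u'" unfolding u'_def qf_scale nsq_scale u0 by simp
  have v'0: "qf \<xi> v' = \<mu> * nsq G v'" unfolding v'_def qf_scale nsq_scale v0 by simp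
  have P0: "of_real \<mu> * ip G u' v' - RR \<xi> u' v' = 0" using null_lemma[OF bnd u'0] by simp
  have "complex_of_real (\<mu> * nsq G (\<lambda>h. u' h + 1 * v' h) - qf \<xi> (\<lambda>h. u' h + 1 * v' h)) = 0"
    unfolding E_Q P0 using u'0 v'0 by simp
  hence "\<mu> * nsq G (\<lambda>h. u' h + 1 * v' h) - qf \<xi> (\<lambda>h. u' h + 1 * v' h) = 0"
    using of_real_eq_0_iff by blast
  thus ?thesis by (simp add: u'_def v'_def)
qed


lemma ip_cnj: "cnj (ip G f g) = ip G g f"
  unfolding ip_def cnj_sum by (simp add: mult.commute)

lemma ip_lin: "ip G (\<lambda>h. a * u h + b * v h) w = a * ip G u w + b * ip G v w"
  unfolding ip_def by (simp add: algebra_simps sum.distrib sum_distrib_left)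

lemma char_exists:
  assumes x1: "nsq G \<xi> = 1" and f1: "nsq G f0 = 1"
    and bnd: "\<forall>f. qf \<xi> f \<le> qf \<xi> f0 * nsq G f" and qx: "qf \<xi> \<xi> \<le> qf \<xi> f0"
    and th: "\<forall>f. \<bar>qf \<xi> f - (cmod (ip G \<xi> f))\<^sup>2\<bar> \<le> \<theta> * nsq G f" and th4: "\<theta> < 1/4"
  shows "\<exists>\<phi>. is_character G \<phi> \<and> (cmod (ip G \<xi> f0))\<^sup>2 \<ge> 1/2 \<and>
     (\<forall>g\<in>carrier G. \<forall>h\<in>carrier G. f0 (g \<otimes> h) = \<phi> g * f0 h)"
proof -
  define \<mu> where "\<mu> = qf \<xi> f0"
  have bnd': "\<forall>f. qf \<xi> f \<le> \<mu> * nsq G f" using bnd \<mu>_def by (simp add: mult.commute)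
  have ipxx: "ip G \<xi> \<xi> = 1" using nsq_c[of \<xi>] x1 by (simp add: ip_def)
  have "qf \<xi> \<xi> \<ge> 1 - \<theta>" using th[rule_format, of \<xi>] ipxx x1 by simp
  hence mu1: "\<mu> \<ge> 1 - \<theta>" using qx \<mu>_def by simp
  have ip2: "(cmod (ip G \<xi> f0))\<^sup>2 \<ge> 1/2"
    using th[rule_format, of f0] f1 mu1 th4 \<mu>_def by simp
  have ipn0: "ip G f0 \<xi> \<noteq> 0"
  proof
    assume "ip G f0 \<xi> = 0"
    hence "ip G \<xi> f0 = 0" using ip_cnj[of f0 \<xi>] by simp
    thus False using ip2 by simp
  qed
  have u0: "qf \<xi> f0 = \<mu> * nsq G f0" using f1 \<mu>_def by simp
  have eig: "\<exists>c. \<forall>h\<in>carrier G. f0 (y \<otimes> h) = c * f0 h" if y: "y \<in> carrier G" for y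
  proof -
    define v where "v = (\<lambda>h. f0 (y \<otimes> h))"
    have v0: "qf \<xi> v = \<mu> * nsq G v" unfolding v_def qf_transl[OF y] nsq_transl[OF y] by (rule u0)
    define a where "a = ip G v \<xi>"
    define b where "b = - ip G f0 \<xi>"
    define w where "w = (\<lambda>h. a * f0 h + b * v h)"
    have w0: "qf \<xi> w = \<mu> * nsq G w" unfolding w_def by (rule null_comb[OF bnd' u0 v0])
    have "ip G w \<xi> = 0" unfolding w_def ip_lin a_def b_def by simp
    hence "ip G \<xi> w = 0" using ip_cnj[of w \<xi>] by simp
    hence "qf \<xi> w \<le> \<theta> * nsq G w" using th[rule_format, of w] by simp
    hence "(\<mu> - \<theta>) * nsq G w \<le> 0" using w0 by (simp add: algebra_simps)
    moreover have "\<mu> - \<theta> > 0" using mu1 th4 by simp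
    ultimately have "nsq G w \<le> 0" by (simp add: mult_le_0_iff)
    hence "nsq G w = 0" using nsq_nonneg[of G w] by simp
    hence wz: "\<forall>h\<in>carrier G. w h = 0" using nsq_zero_iff by blast
    show ?thesis
    proof (intro exI ballI)
      fix h assume h: "h \<in> carrier G"
      have "a * f0 h = ip G f0 \<xi> * f0 (y \<otimes> h)" using wz h unfolding w_def b_def v_def by (simp add: algebra_simps)
      thus "f0 (y \<otimes> h) = (a / ip G f0 \<xi>) * f0 h" using ipn0 by (simp add: field_simps)
    qed
  qed
  have f01: "f0 \<one> \<noteq> 0"
  proof
    assume z: "f0 \<one> = 0"
    have "\<forall>y\<in>carrier G. f0 y = 0"
    proof
      fix y assume y: "y \<in> carrier G"
      obtain c where "\<forall>h\<in>carrier G. f0 (y \<otimes> h) = c * f0 h" using eig[OF y] by blast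
      thus "f0 y = 0" using z y by (metis one_closed r_one mult_zero_right)
    qed
    hence "nsq G f0 = 0" using nsq_zero_iff by blast
    thus False using f1 by simp
  qed
  define \<phi> where "\<phi> = (\<lambda>y. f0 y / f0 \<one>)"
  have rel: "\<forall>g\<in>carrier G. \<forall>h\<in>carrier G. f0 (g \<otimes> h) = \<phi> g * f0 h"
  proof (intro ballI)
    fix g h assume g: "g \<in> carrier G" and h: "h \<in> carrier G"
    obtain c where c: "\<forall>h\<in>carrier G. f0 (g \<otimes> h) = c * f0 h" using eig[OF g] by blast
    have "f0 g = c * f0 \<one>" using c[rule_format, of \<one>] g by simp
    hence "c = \<phi> g" using f01 \<phi>_def by simp
    thus "f0 (g \<otimes> h) = \<phi> g * f0 h" using c h by simp
  qed
  have "is_character G \<phi>"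
    unfolding is_character_def
  proof (intro conjI ballI)
    fix g assume g: "g \<in> carrier G"
    have "nsq G (\<lambda>h. \<phi> g * f0 h) = nsq G f0"
      using nsq_transl[OF g, of f0] rel g by (metis (no_types, lifting) nsq_cong)
    hence "(cmod (\<phi> g))\<^sup>2 = 1" using f1 nsq_scale by simp
    thus "cmod (\<phi> g) = 1" using norm_ge_zero[of "\<phi> g"] by (simp add: power2_eq_1_iff)
  next
    fix g h assume g: "g \<in> carrier G" and h: "h \<in> carrier G"
    have "f0 (g \<otimes> h) = \<phi> g * f0 h" using rel g h by simp
    thus "\<phi> (g \<otimes> h) = \<phi> g * \<phi> h" unfolding \<phi>_def by simp
  qed
  thus ?thesis using ip2 rel by blast
qed

end

theorem lemmaA4:
  fixes G :: "('a, 'b) monoid_scheme" and S :: "'a set"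
    and \<alpha> :: "'a \<Rightarrow> complex" and \<xi> :: "'a \<Rightarrow> complex"
  assumes "group G" and "finite (carrier G)"
    and "S \<subseteq> carrier G" and "S \<noteq> {}"
    and "\<forall>g\<in>S. inv\<^bsub>G\<^esub> g \<in> S"
    and "generate G S = carrier G"
    and "lambda0_avg_norm G S < 1"
    and "\<forall>g\<in>S. cmod (\<alpha> g) = 1"
    and "l2norm G \<xi> = 1"
    and "Max ((\<lambda>g. l2norm G (\<lambda>h. lreg G g \<xi> h - \<alpha> g * \<xi> h)) ` S) > 0"
  shows "\<exists>\<phi>. is_character G \<phi> \<and>
    (\<forall>g\<in>S. cmod (cnj (\<phi> g) - \<alpha> g) \<le>
      sqrt (100 * Max ((\<lambda>g. l2norm G (\<lambda>h. lreg G g \<xi> h - \<alpha> g * \<xi> h)) ` S)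
            / (1 - lambda0_avg_norm G S)))"
proof -
  interpret fsetup G S
    using assms(1-4) by (simp add: fsetup_def fgrp_def fgrp_axioms_def fsetup_axioms_def)
  define \<epsilon> where "\<epsilon> = Max ((\<lambda>g. l2norm G (\<lambda>h. lreg G g \<xi> h - \<alpha> g * \<xi> h)) ` S)"
  define \<delta> where "\<delta> = lambda0_avg_norm G S"
  have ep: "\<epsilon> > 0" using assms(10) \<epsilon>_def by simp
  have d0: "0 \<le> \<delta>" "\<delta> < 1" using delta_nonneg assms(7) \<delta>_def by auto
  have eg: "l2norm G (\<lambda>h. lreg G g \<xi> h - \<alpha> g * \<xi> h) \<le> \<epsilon>" if "g \<in> S" for g
    unfolding \<epsilon>_def using that S_fin by (intro Max_ge) auto
  have x1: "nsq G \<xi> = 1" using assms(9) l2norm_sq[of G \<xi>] by simp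
  define \<kappa> where "\<kappa> = 2 * \<epsilon> / (1 - \<delta>)"
  have kp: "\<kappa> > 0" using ep d0 \<kappa>_def by simp
  show ?thesis
  proof (cases "\<kappa> \<ge> 1/4")
    case True
    have "100 * \<epsilon> / (1 - \<delta>) = 50 * \<kappa>" using \<kappa>_def by simp
    hence big: "4 \<le> 100 * \<epsilon> / (1 - \<delta>)" using True by simp
    have "is_character G (\<lambda>_. 1)" by (simp add: is_character_def)
    moreover have "cmod (cnj 1 - \<alpha> g) \<le> sqrt (100 * \<epsilon> / (1 - \<delta>))" if g: "g \<in> S" for g
    proof -
      have "cmod (cnj 1 - \<alpha> g) \<le> cmod (1::complex) + cmod (\<alpha> g)" using norm_triangle_ineq4[of "1::complex" "\<alpha> g"] by simp
      also have "\<dots> = 2" using assms(8) g by simp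
      also have "\<dots> = sqrt 4" by simp
      also have "\<dots> \<le> sqrt (100 * \<epsilon> / (1 - \<delta>))" using big by (rule real_sqrt_le_mono)
      finally show ?thesis .
    qed
    ultimately show ?thesis unfolding \<epsilon>_def \<delta>_def by blast
  next
    case False
    have e2: "\<forall>g\<in>S. nsq G (\<lambda>h. lreg G g \<xi> h - \<alpha> g * \<xi> h) \<le> \<epsilon>\<^sup>2"
    proof
      fix g assume g: "g \<in> S"
      have "(l2norm G (\<lambda>h. lreg G g \<xi> h - \<alpha> g * \<xi> h))\<^sup>2 \<le> \<epsilon>\<^sup>2"
        using eg[OF g] by (intro power_mono) (auto simp: l2norm_nsq nsq_nonneg)
      thus "nsq G (\<lambda>h. lreg G g \<xi> h - \<alpha> g * \<xi> h) \<le> \<epsilon>\<^sup>2" by (simp add: l2norm_sq)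
    qed
    have "(1 - \<delta>)\<^sup>2 * EE \<xi> \<le> 4 * \<epsilon>\<^sup>2" using L9[OF assms(7) x1 assms(8) e2] \<delta>_def by simp
    hence "EE \<xi> \<le> 4 * \<epsilon>\<^sup>2 / (1 - \<delta>)\<^sup>2" using d0 by (simp add: field_simps)
    also have "\<dots> = \<kappa>\<^sup>2" unfolding \<kappa>_def by (simp add: power_divide)
    finally have "sqrt (EE \<xi>) \<le> \<kappa>" using kp by (simp add: real_sqrt_le_iff real_le_lsqrt)
    hence th4: "sqrt (EE \<xi>) < 1/4" using False by simp
    obtain f0 where f1: "nsq G f0 = 1" and bnd: "\<forall>f. qf \<xi> f \<le> qf \<xi> f0 * nsq G f"
      and qx: "qf \<xi> \<xi> \<le> qf \<xi> f0" using maximizer[OF x1] by blast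
    obtain \<phi> where chi: "is_character G \<phi>" and ip2: "(cmod (ip G \<xi> f0))\<^sup>2 \<ge> 1/2"
      and rel: "\<forall>g\<in>carrier G. \<forall>h\<in>carrier G. f0 (g \<otimes>\<^bsub>G\<^esub> h) = \<phi> g * f0 h"
      using char_exists[OF x1 f1 bnd qx _ th4] L10 by blast
    have "cmod (cnj (\<phi> g) - \<alpha> g) \<le> sqrt (100 * \<epsilon> / (1 - \<delta>))" if g: "g \<in> S" for g
    proof -
      have gC: "g \<in> carrier G" using g S_sub by auto
      define d where "d = (\<lambda>h. lreg G g \<xi> h - \<alpha> g * \<xi> h)"
      have "ip G (\<lambda>h. lreg G g \<xi> h) f0 = (\<Sum>h\<in>carrier G. (\<lambda>k. \<xi> (inv\<^bsub>G\<^esub> g \<otimes>\<^bsub>G\<^esub> k) * cnj (f0 k)) (g \<otimes>\<^bsub>G\<^esub> h))"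
        unfolding ip_def lreg_def using reidx_l[OF gC, of "\<lambda>k. \<xi> (inv\<^bsub>G\<^esub> g \<otimes>\<^bsub>G\<^esub> k) * cnj (f0 k)"] by simp
      also have "\<dots> = cnj (\<phi> g) * ip G \<xi> f0"
        unfolding ip_def sum_distrib_left using gC rel
        by (intro sum.cong refl) (simp add: m_assoc[symmetric])
      finally have "ip G (\<lambda>h. lreg G g \<xi> h) f0 = cnj (\<phi> g) * ip G \<xi> f0" .
      hence ipd: "ip G d f0 = (cnj (\<phi> g) - \<alpha> g) * ip G \<xi> f0"
        unfolding d_def using ip_lin[of 1 "\<lambda>h. lreg G g \<xi> h" "- \<alpha> g" \<xi> f0]
        by (simp add: algebra_simps)
      have "cmod (ip G d f0) \<le> l2norm G d * l2norm G f0" by (rule cs_ip)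
      also have "\<dots> \<le> \<epsilon>" using eg[OF g] f1 unfolding d_def by (simp add: l2norm_nsq)
      finally have "cmod (cnj (\<phi> g) - \<alpha> g) * cmod (ip G \<xi> f0) \<le> \<epsilon>" unfolding ipd norm_mult .
      hence "(cmod (cnj (\<phi> g) - \<alpha> g) * cmod (ip G \<xi> f0))\<^sup>2 \<le> \<epsilon>\<^sup>2"
        by (intro power_mono) auto
      hence A: "(cmod (cnj (\<phi> g) - \<alpha> g))\<^sup>2 * (cmod (ip G \<xi> f0))\<^sup>2 \<le> \<epsilon>\<^sup>2"
        by (simp add: power_mult_distrib)
      have "(cmod (cnj (\<phi> g) - \<alpha> g))\<^sup>2 * (1/2) \<le> (cmod (cnj (\<phi> g) - \<alpha> g))\<^sup>2 * (cmod (ip G \<xi> f0))\<^sup>2"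
        using ip2 by (intro mult_left_mono) auto
      hence B: "(cmod (cnj (\<phi> g) - \<alpha> g))\<^sup>2 \<le> 2 * \<epsilon>\<^sup>2" using A by simp
      have k4: "2 * \<epsilon> < (1 - \<delta>) / 4" using False \<kappa>_def d0 by (simp add: field_simps)
      have "2 * \<epsilon>\<^sup>2 = \<epsilon> * (2 * \<epsilon>)" by (simp add: power2_eq_square)
      also have "\<dots> \<le> \<epsilon> * ((1 - \<delta>) / 4)" using k4 ep by (intro mult_left_mono) auto
      also have "\<dots> \<le> \<epsilon> * (100 / (1 - \<delta>))"
      proof (intro mult_left_mono)
        have "(1 - \<delta>) * (1 - \<delta>) \<le> 1 * 1" using d0 by (intro mult_mono) auto
        thus "(1 - \<delta>) / 4 \<le> 100 / (1 - \<delta>)" using d0 by (simp add: field_simps)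
      qed (use ep in auto)
      also have "\<dots> = 100 * \<epsilon> / (1 - \<delta>)" by simp
      finally show ?thesis using B by (intro real_le_rsqrt) auto
    qed
    thus ?thesis using chi unfolding \<epsilon>_def \<delta>_def by blast
  qed
qed

end
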